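(* Let $\mu$ be an Ising model on $\{-1,1\}^p$ with $\ell_1$-width at most $\gamma>0$ and $u\in[p]$. For every $\underline\theta_u\in\mathbb R^p$ with $\|\underline\theta_u\|_1\le\gamma$, \[ \mathcal L_u(\underline\theta_u)-\mathcal L_u(\underline\theta^*_u)-\langle\nabla\mathcal L_u(\underline\theta^*_u),\underline\theta_u-\underline\theta^*_u\rangle\ \ge\ \frac{e^{-3\gamma}}{2+2\gamma}\max_{v\ne u}|\theta_{u,v}-\theta^*_{u,v}|^2 . \]
   Context: Ising model: $\mu(\underline\sigma)\propto\exp\big(\sum_{\{u,v\}}\theta^*_{u,v}\sigma_u\sigma_v+\sum_u\theta^*_u\sigma_u\big)$ on $\{-1,1\}^p$, first sum over unordered pairs of distinct indices, symmetric couplings $\theta^*_{u,v}=\theta^*_{v,u}$; $\ell_1$-width at most $\gamma$ means $\sum_{v\ne u}|\theta^*_{u,v}|+|\theta^*_u|\le\gamma$ for all $u$. Local parameter vector $\underline\theta_u=(\theta_u,(\theta_{u,v})_{v\ne u})\in\mathbb R^p$ with true value $\underline\theta^*_u=(\theta^*_u,(\theta^*_{u,v})_{v\ne u})$; local energy $E_u(\underline\sigma;\underline\theta_u)=\sigma_u(\theta_u+\sum_{v\ne u}\theta_{u,v}\sigma_v)$; interaction screening loss $\mathcal L_u(\underline\theta_u)=\mathbb E_\mu[e^{-E_u(\underline\sigma;\underline\theta_u)}]$. *)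

theory Defs
  imports "HOL-Analysis.Analysis"
begin

text \<open>Spin configurations on the finite node set 'n (so p = CARD('n)).\<close>
definition spins :: "('n::finite \<Rightarrow> real) set" where
  "spins = {\<sigma>. \<forall>v. \<sigma> v \<in> {-1, 1}}"

text \<open>Ising Hamiltonian: sum over unordered pairs {u,v}, u \<noteq> v, written as half the
  sum over ordered pairs (couplings are assumed symmetric), plus the field term.\<close>
definition ising_H :: "('n::finite \<Rightarrow> 'n \<Rightarrow> real) \<Rightarrow> ('n \<Rightarrow> real) \<Rightarrow> ('n \<Rightarrow> real) \<Rightarrow> real" where
  "ising_H J h \<sigma> = (1/2) * (\<Sum>u\<in>UNIV. \<Sum>v\<in>UNIV - {u}. J u v * \<sigma> u * \<sigma> v) + (\<Sum>u\<in>UNIV. h u * \<sigma> u)"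

definition ising_Z :: "('n::finite \<Rightarrow> 'n \<Rightarrow> real) \<Rightarrow> ('n \<Rightarrow> real) \<Rightarrow> real" where
  "ising_Z J h = (\<Sum>\<sigma>\<in>spins. exp (ising_H J h \<sigma>))"

definition ising_mu :: "('n::finite \<Rightarrow> 'n \<Rightarrow> real) \<Rightarrow> ('n \<Rightarrow> real) \<Rightarrow> ('n \<Rightarrow> real) \<Rightarrow> real" where
  "ising_mu J h \<sigma> = exp (ising_H J h \<sigma>) / ising_Z J h"

definition l1_width_le :: "('n::finite \<Rightarrow> 'n \<Rightarrow> real) \<Rightarrow> ('n \<Rightarrow> real) \<Rightarrow> real \<Rightarrow> bool" where
  "l1_width_le J h \<gamma> \<longleftrightarrow> (\<forall>u. (\<Sum>v\<in>UNIV - {u}. \<bar>J u v\<bar>) + \<bar>h u\<bar> \<le> \<gamma>)"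

text \<open>Local parameter vector in R^p: coordinate u is the field theta_u,
  coordinate v \<noteq> u is the coupling theta_{u,v}.\<close>
definition local_energy :: "'n::finite \<Rightarrow> ('n \<Rightarrow> real) \<Rightarrow> real^'n \<Rightarrow> real" where
  "local_energy u \<sigma> \<theta> = \<sigma> u * (\<theta>$u + (\<Sum>v\<in>UNIV - {u}. \<theta>$v * \<sigma> v))"

definition true_local_param :: "('n::finite \<Rightarrow> 'n \<Rightarrow> real) \<Rightarrow> ('n \<Rightarrow> real) \<Rightarrow> 'n \<Rightarrow> real^'n" where
  "true_local_param J h u = (\<chi> v. if v = u then h u else J u v)"

definition ISO_loss :: "('n::finite \<Rightarrow> 'n \<Rightarrow> real) \<Rightarrow> ('n \<Rightarrow> real) \<Rightarrow> 'n \<Rightarrow> real^'n \<Rightarrow> real" where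
  "ISO_loss J h u \<theta> = (\<Sum>\<sigma>\<in>spins. ising_mu J h \<sigma> * exp (- local_energy u \<sigma> \<theta>))"

definition l1norm :: "real^'n::finite \<Rightarrow> real" where
  "l1norm x = (\<Sum>v\<in>UNIV. \<bar>x$v\<bar>)"

end

theory Submission
  imports Defs
begin

lemma exp_aux_pos:
  fixes z :: real assumes "z \<ge> 0"
  shows "z^2 \<le> (exp(-z) - 1 + z) * (2 + z)"
proof -
  let ?f = "\<lambda>t::real. (exp(-t) - 1 + t) * (2 + t) - t^2"
  have "?f 0 \<le> ?f z"
  proof (rule DERIV_nonneg_imp_nondecreasing[OF assms])
    fix x :: real assume "0 \<le> x" "x \<le> z"
    have d: "DERIV ?f x :> ((- exp(-x) + 1) * (2 + x) + (exp(-x) - 1 + x) - 2 * x)"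
      by (auto intro!: derivative_eq_intros simp: power2_eq_square)
    have "1 + x \<le> exp x" by simp
    hence "(1 + x) * exp(-x) \<le> exp x * exp (-x)" by (simp add: mult_right_mono)
    hence "(1 + x) * exp(-x) \<le> 1" by (simp add: exp_minus_inverse)
    hence "(- exp(-x) + 1) * (2 + x) + (exp(-x) - 1 + x) - 2 * x \<ge> 0"
      by (simp add: algebra_simps)
    with d show "\<exists>y. DERIV ?f x :> y \<and> y \<ge> 0" by blast
  qed
  thus ?thesis by simp
qed

lemma exp_aux_neg:
  fixes t :: real assumes "t \<ge> 0"
  shows "t^2 / 2 \<le> exp t - 1 - t"
proof -
  let ?f = "\<lambda>t::real. exp t - 1 - t - t^2/2"
  have "?f 0 \<le> ?f t"
  proof (rule DERIV_nonneg_imp_nondecreasing[OF assms])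
    fix x :: real assume "0 \<le> x" "x \<le> t"
    have d: "DERIV ?f x :> (exp x - 1 - x)"
      by (auto intro!: derivative_eq_intros simp: power2_eq_square)
    have "1 + x \<le> exp x" by simp
    hence "exp x - 1 - x \<ge> 0" by linarith
    with d show "\<exists>y. DERIV ?f x :> y \<and> y \<ge> 0" by blast
  qed
  thus ?thesis by simp
qed

lemma exp_quad_lower:
  fixes z :: real
  shows "z^2 / (2 + \<bar>z\<bar>) \<le> exp(-z) - 1 + z"
proof (cases "z \<ge> 0")
  case True
  then show ?thesis using exp_aux_pos[OF True] by (simp add: divide_le_eq add_pos_nonneg)
next
  case False
  have "z^2/2 \<le> exp(-z) - 1 + z" using exp_aux_neg[of "-z"] False by simp
  moreover have "z^2 / (2 + \<bar>z\<bar>) \<le> z^2/2"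
    by (rule divide_left_mono) auto
  ultimately show ?thesis by linarith
qed


definition xv :: "'n::finite \<Rightarrow> ('n \<Rightarrow> real) \<Rightarrow> real^'n" where
  "xv u \<sigma> = (\<chi> w. if w = u then \<sigma> u else \<sigma> u * \<sigma> w)"

lemma le_inner: "local_energy u \<sigma> \<theta> = \<theta> \<bullet> xv u \<sigma>"
proof -
  have "\<theta> \<bullet> xv u \<sigma> = (\<Sum>w\<in>UNIV. \<theta>$w * xv u \<sigma> $ w)"
    by (simp add: inner_vec_def)
  also have "\<dots> = \<theta>$u * \<sigma> u + (\<Sum>w\<in>UNIV-{u}. \<theta>$w * (\<sigma> u * \<sigma> w))"
    by (simp add: sum.remove[of UNIV u] xv_def)
  also have "\<dots> = local_energy u \<sigma> \<theta>"
    by (simp add: local_energy_def algebra_simps sum_distrib_left)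
  finally show ?thesis by simp
qed

lemma flip_sum:
  fixes g f :: "'a \<Rightarrow> real"
  assumes "finite A" "v \<in> A"
  shows "(\<Sum>w\<in>A. g w * (f(v:=y)) w) = (\<Sum>w\<in>A. g w * f w) + g v * (y - f v)"
proof -
  have "(\<Sum>w\<in>A. g w * (f(v:=y)) w) = g v * y + (\<Sum>w\<in>A-{v}. g w * (f(v:=y)) w)"
    using assms by (simp add: sum.remove[of A v])
  also have "(\<Sum>w\<in>A-{v}. g w * (f(v:=y)) w) = (\<Sum>w\<in>A-{v}. g w * f w)"
    by (rule sum.cong) auto
  also have "(\<Sum>w\<in>A. g w * f w) = g v * f v + (\<Sum>w\<in>A-{v}. g w * f w)"
    using assms by (simp add: sum.remove[of A v])
  moreover have "g v * y = g v * f v + g v * (y - f v)" by (simp add: algebra_simps)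
  ultimately show ?thesis by linarith
qed

lemma sum_if_single:
  fixes X :: real
  shows "(\<Sum>a\<in>(UNIV::'n::finite set). if a = v then X else Y a) = X + (\<Sum>a\<in>UNIV-{v}. Y a)"
proof -
  have "(\<Sum>a\<in>(UNIV::'n set). if a = v then X else Y a) = X + (\<Sum>a\<in>UNIV-{v}. if a = v then X else Y a)"
    by (simp add: sum.remove[of UNIV v])
  also have "(\<Sum>a\<in>UNIV-{v}. if a = v then X else Y a) = (\<Sum>a\<in>UNIV-{v}. Y a)"
    by (rule sum.cong) auto
  finally show ?thesis .
qed

lemma H_flip:
  fixes J :: "'n::finite \<Rightarrow> 'n \<Rightarrow> real"
  assumes sym: "\<And>a b. J a b = J b a"
  shows "ising_H J h (\<sigma>(v:=-\<sigma> v)) = ising_H J h \<sigma> - 2 * \<sigma> v * ((\<Sum>b\<in>UNIV-{v}. J v b * \<sigma> b) + h v)"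
proof -
  define \<sigma>' where "\<sigma>' = \<sigma>(v:=-\<sigma> v)"
  define T where "T = (\<lambda>\<tau> a. \<Sum>b\<in>UNIV-{a}. J a b * \<tau> a * \<tau> b)"
  have Tv: "T \<sigma>' v = - T \<sigma> v"
  proof -
    have "T \<sigma>' v = (\<Sum>b\<in>UNIV-{v}. - (J v b * \<sigma> v * \<sigma> b))"
      unfolding T_def by (rule sum.cong) (auto simp: \<sigma>'_def)
    thus ?thesis by (simp add: T_def sum_negf)
  qed
  have Ta: "T \<sigma>' a = T \<sigma> a - 2 * J a v * \<sigma> a * \<sigma> v" if "a \<noteq> v" for a
  proof -
    have "T \<sigma>' a = (\<Sum>b\<in>UNIV-{a}. (J a b * \<sigma> a) * (\<sigma>(v:=-\<sigma> v)) b)"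
      unfolding T_def \<sigma>'_def using that by simp
    also have "\<dots> = (\<Sum>b\<in>UNIV-{a}. (J a b * \<sigma> a) * \<sigma> b) + (J a v * \<sigma> a) * (-\<sigma> v - \<sigma> v)"
      by (rule flip_sum) (use that in auto)
    finally show ?thesis by (simp add: T_def algebra_simps)
  qed
  have "(\<Sum>a\<in>UNIV. T \<sigma>' a) = (\<Sum>a\<in>UNIV. T \<sigma> a + (if a = v then - 2 * T \<sigma> v else - 2 * J a v * \<sigma> a * \<sigma> v))"
    by (rule sum.cong) (auto simp: Tv Ta)
  also have "\<dots> = (\<Sum>a\<in>UNIV. T \<sigma> a) + (- 2 * T \<sigma> v + (\<Sum>a\<in>UNIV-{v}. - 2 * J a v * \<sigma> a * \<sigma> v))"
    by (simp add: sum.distrib sum_if_single)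
  also have "(\<Sum>a\<in>UNIV-{v}. - 2 * J a v * \<sigma> a * \<sigma> v) = - 2 * \<sigma> v * (\<Sum>b\<in>UNIV-{v}. J v b * \<sigma> b)"
    by (simp add: sum_distrib_left sym algebra_simps)
  also have "T \<sigma> v = \<sigma> v * (\<Sum>b\<in>UNIV-{v}. J v b * \<sigma> b)"
    by (simp add: T_def sum_distrib_left algebra_simps)
  finally have D: "(\<Sum>a\<in>UNIV. T \<sigma>' a) = (\<Sum>a\<in>UNIV. T \<sigma> a) - 4 * \<sigma> v * (\<Sum>b\<in>UNIV-{v}. J v b * \<sigma> b)"
    by simp
  have F: "(\<Sum>a\<in>UNIV. h a * \<sigma>' a) = (\<Sum>a\<in>UNIV. h a * \<sigma> a) + h v * (-\<sigma> v - \<sigma> v)"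
    unfolding \<sigma>'_def by (rule flip_sum) auto
  have "ising_H J h \<sigma>' = 1/2 * (\<Sum>a\<in>UNIV. T \<sigma>' a) + (\<Sum>a\<in>UNIV. h a * \<sigma>' a)"
    by (simp add: ising_H_def T_def)
  also have "\<dots> = 1/2 * ((\<Sum>a\<in>UNIV. T \<sigma> a) - 4 * \<sigma> v * (\<Sum>b\<in>UNIV-{v}. J v b * \<sigma> b)) + ((\<Sum>a\<in>UNIV. h a * \<sigma> a) + h v * (-\<sigma> v - \<sigma> v))"
    by (simp only: D F)
  also have "\<dots> = ising_H J h \<sigma> - 2 * \<sigma> v * ((\<Sum>b\<in>UNIV-{v}. J v b * \<sigma> b) + h v)"
    by (simp add: ising_H_def T_def algebra_simps)
  finally show ?thesis by (simp add: \<sigma>'_def)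
qed


lemma spins_cases: "\<sigma> \<in> spins \<Longrightarrow> \<sigma> w = -1 \<or> \<sigma> w = 1"
  unfolding spins_def by auto

lemma spins_abs: "\<sigma> \<in> spins \<Longrightarrow> \<bar>\<sigma> w\<bar> = 1"
  using spins_cases[of \<sigma> w] by auto

lemma spins_sq: "\<sigma> \<in> spins \<Longrightarrow> \<sigma> w * \<sigma> w = 1"
  using spins_cases[of \<sigma> w] by auto

lemma spins_flip: "\<sigma> \<in> spins \<Longrightarrow> \<sigma>(v:=-\<sigma> v) \<in> spins"
  unfolding spins_def by auto

lemma finite_spins: "finite (spins :: ('n::finite \<Rightarrow> real) set)"
proof -
  have "spins \<subseteq> PiE (UNIV::'n set) (\<lambda>_. {-1, 1::real})"
    unfolding spins_def by (auto simp: PiE_def extensional_def)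
  moreover have "finite (PiE (UNIV::'n set) (\<lambda>_. {-1, 1::real}))"
    by (rule finite_PiE) auto
  ultimately show ?thesis by (rule finite_subset)
qed

lemma sum_flip_reindex:
  "(\<Sum>\<sigma>\<in>spins. F (\<sigma>(v:=-\<sigma> v))) = (\<Sum>\<sigma>\<in>spins. (F \<sigma>::real))"
  by (rule sum.reindex_bij_witness[where i="\<lambda>\<sigma>. \<sigma>(v:=-\<sigma> v)" and j="\<lambda>\<sigma>. \<sigma>(v:=-\<sigma> v)"])
     (auto simp: spins_flip)

lemma Z_pos: "ising_Z J h > 0"
proof -
  have "(\<lambda>_. 1) \<in> (spins :: ('n::finite \<Rightarrow> real) set)" by (simp add: spins_def)
  hence "exp (ising_H J h (\<lambda>_. 1)) \<le> ising_Z J h"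
    unfolding ising_Z_def by (intro member_le_sum finite_spins) auto
  moreover have "exp (ising_H J h (\<lambda>_. 1)) > 0" by simp
  ultimately show ?thesis by linarith
qed

lemma mu_nonneg: "ising_mu J h \<sigma> \<ge> 0"
  using Z_pos[of J h] by (simp add: ising_mu_def)

lemma mu_sum: "(\<Sum>\<sigma>\<in>spins. ising_mu J h \<sigma>) = 1"
  using Z_pos[of J h] by (simp add: ising_mu_def ising_Z_def flip: sum_divide_distrib)

lemma abs_sum_spins:
  assumes "\<sigma> \<in> spins"
  shows "\<bar>(\<Sum>b\<in>A. c b * \<sigma> b)\<bar> \<le> (\<Sum>b\<in>A. \<bar>c b\<bar>)"
proof -
  have "\<bar>(\<Sum>b\<in>A. c b * \<sigma> b)\<bar> \<le> (\<Sum>b\<in>A. \<bar>c b * \<sigma> b\<bar>)" by (rule sum_abs)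
  also have "\<dots> = (\<Sum>b\<in>A. \<bar>c b\<bar>)"
    by (rule sum.cong) (auto simp: abs_mult spins_abs[OF assms])
  finally show ?thesis .
qed

lemma mu_flip:
  fixes J :: "'n::finite \<Rightarrow> 'n \<Rightarrow> real"
  assumes sym: "\<And>a b. J a b = J b a" and width: "l1_width_le J h \<gamma>"
    and sp: "\<sigma> \<in> spins"
  shows "ising_mu J h (\<sigma>(v:=-\<sigma> v)) \<ge> exp (-2*\<gamma>) * ising_mu J h \<sigma>"
proof -
  let ?F = "(\<Sum>b\<in>UNIV-{v}. J v b * \<sigma> b) + h v"
  have "\<bar>?F\<bar> \<le> \<bar>\<Sum>b\<in>UNIV-{v}. J v b * \<sigma> b\<bar> + \<bar>h v\<bar>" by (rule abs_triangle_ineq)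
  also have "\<dots> \<le> (\<Sum>b\<in>UNIV-{v}. \<bar>J v b\<bar>) + \<bar>h v\<bar>"
    using abs_sum_spins[OF sp] by simp
  also have "\<dots> \<le> \<gamma>" using width by (simp add: l1_width_le_def)
  finally have Fb: "\<bar>?F\<bar> \<le> \<gamma>" .
  have "\<bar>\<sigma> v * ?F\<bar> \<le> \<gamma>" using Fb by (simp add: abs_mult spins_abs[OF sp])
  moreover have "ising_H J h (\<sigma>(v:=-\<sigma> v)) = ising_H J h \<sigma> - 2 * (\<sigma> v * ?F)"
    using H_flip[OF sym, where h=h and \<sigma>=\<sigma> and v=v] by simp
  ultimately have "ising_H J h (\<sigma>(v:=-\<sigma> v)) \<ge> -2*\<gamma> + ising_H J h \<sigma>"
    by (simp add: abs_le_iff)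
  hence "exp (ising_H J h (\<sigma>(v:=-\<sigma> v))) \<ge> exp (-2*\<gamma>) * exp (ising_H J h \<sigma>)"
    by (simp flip: exp_add)
  hence "exp (-2*\<gamma>) * exp (ising_H J h \<sigma>) / ising_Z J h \<le> exp (ising_H J h (\<sigma>(v:=-\<sigma> v))) / ising_Z J h"
    using Z_pos[of J h] by (intro divide_right_mono) auto
  thus ?thesis by (simp add: ising_mu_def)
qed


lemma variance_lb:
  fixes J :: "'n::finite \<Rightarrow> 'n \<Rightarrow> real"
  assumes sym: "\<And>a b. J a b = J b a" and width: "l1_width_le J h \<gamma>"
    and gpos: "\<gamma> > 0" and vu: "v \<noteq> u"
  shows "(\<Sum>\<sigma>\<in>spins. ising_mu J h \<sigma> * (\<Delta> \<bullet> xv u \<sigma>)^2) \<ge> exp(-2*\<gamma>) * (\<Delta>$v)^2"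
proof -
  define \<mu> where "\<mu> = ising_mu J h"
  define f where "f = (\<lambda>\<sigma>. (\<Delta> \<bullet> xv u \<sigma>)^2)"
  define S where "S = (\<lambda>\<sigma>::'n\<Rightarrow>real. \<Delta>$u + (\<Sum>w\<in>UNIV-{u}. \<Delta>$w * \<sigma> w))"
  define c where "c = exp(-2*\<gamma>)"
  have c0: "0 \<le> c" "c \<le> 1" using gpos by (auto simp: c_def)
  have fS: "f \<sigma> = (S \<sigma>)^2" if "\<sigma> \<in> spins" for \<sigma>
  proof -
    have "f \<sigma> = (\<sigma> u * S \<sigma>)^2"
      by (simp add: f_def S_def flip: le_inner) (simp add: local_energy_def)
    also have "\<dots> = (\<sigma> u * \<sigma> u) * (S \<sigma>)^2" by (simp add: power2_eq_square algebra_simps)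
    finally show ?thesis using spins_sq[OF that] by simp
  qed
  have Sf: "S (\<sigma>(v:=-\<sigma> v)) = S \<sigma> + \<Delta>$v * (-\<sigma> v - \<sigma> v)" for \<sigma>
    unfolding S_def using vu by (subst flip_sum) auto
  have pair: "f \<sigma> + f (\<sigma>(v:=-\<sigma> v)) \<ge> 2 * (\<Delta>$v)^2" if sp: "\<sigma> \<in> spins" for \<sigma>
  proof -
    have e: "(S \<sigma>)^2 + (S \<sigma> + \<Delta>$v * (-\<sigma> v - \<sigma> v))^2
        = 2 * (S \<sigma> - \<Delta>$v * \<sigma> v)^2 + 2 * (\<Delta>$v)^2 * (\<sigma> v * \<sigma> v)"
      by (simp add: power2_eq_square algebra_simps)
    show ?thesis using e spins_sq[OF sp, of v] fS[OF sp] fS[OF spins_flip[OF sp]] Sf[of \<sigma>]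
      by simp
  qed
  have f0: "f \<sigma> \<ge> 0" for \<sigma> by (simp add: f_def)
  have per: "\<mu> \<sigma> * f \<sigma> + \<mu> (\<sigma>(v:=-\<sigma> v)) * f (\<sigma>(v:=-\<sigma> v)) \<ge> c * \<mu> \<sigma> * (2 * (\<Delta>$v)^2)"
    if sp: "\<sigma> \<in> spins" for \<sigma>
  proof -
    have m0: "\<mu> \<sigma> \<ge> 0" by (simp add: \<mu>_def mu_nonneg)
    have "c * \<mu> \<sigma> * f \<sigma> \<le> \<mu> \<sigma> * f \<sigma>"
    proof -
      have "0 \<le> \<mu> \<sigma> * f \<sigma>" using m0 f0[of \<sigma>] by simp
      hence "c * (\<mu> \<sigma> * f \<sigma>) \<le> 1 * (\<mu> \<sigma> * f \<sigma>)" using c0 by (intro mult_right_mono) auto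
      thus ?thesis by (simp add: mult.assoc)
    qed
    moreover have "c * \<mu> \<sigma> * f (\<sigma>(v:=-\<sigma> v)) \<le> \<mu> (\<sigma>(v:=-\<sigma> v)) * f (\<sigma>(v:=-\<sigma> v))"
      using mu_flip[OF sym width sp, of v] f0 unfolding \<mu>_def c_def
      by (intro mult_right_mono) auto
    moreover have "c * \<mu> \<sigma> * (2 * (\<Delta>$v)^2) \<le> c * \<mu> \<sigma> * (f \<sigma> + f (\<sigma>(v:=-\<sigma> v)))"
      using pair[OF sp] c0 m0 by (intro mult_left_mono) auto
    ultimately show ?thesis by (simp add: algebra_simps)
  qed
  have "2 * (\<Sum>\<sigma>\<in>spins. \<mu> \<sigma> * f \<sigma>) = (\<Sum>\<sigma>\<in>spins. \<mu> \<sigma> * f \<sigma> + \<mu> (\<sigma>(v:=-\<sigma> v)) * f (\<sigma>(v:=-\<sigma> v)))"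
    by (simp add: sum.distrib sum_flip_reindex[where F="\<lambda>\<sigma>. \<mu> \<sigma> * f \<sigma>"])
  also have "\<dots> \<ge> (\<Sum>\<sigma>\<in>spins. c * \<mu> \<sigma> * (2 * (\<Delta>$v)^2))"
    by (rule sum_mono) (rule per)
  also have "(\<Sum>\<sigma>\<in>spins. c * \<mu> \<sigma> * (2 * (\<Delta>$v)^2)) = c * (2 * (\<Delta>$v)^2) * (\<Sum>\<sigma>\<in>spins. \<mu> \<sigma>)"
    by (simp add: sum_distrib_left sum_distrib_right algebra_simps)
  also have "(\<Sum>\<sigma>\<in>spins. \<mu> \<sigma>) = 1" by (simp add: \<mu>_def mu_sum)
  finally show ?thesis by (simp add: \<mu>_def f_def c_def)
qed


lemma deriv_test:
  fixes \<mu> :: "('n::finite \<Rightarrow> real) \<Rightarrow> real"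
  shows "((\<lambda>\<theta>::real^'n. \<Sum>\<sigma>\<in>spins. \<mu> \<sigma> * exp(-(\<theta> \<bullet> xv u \<sigma>))) has_derivative
     (\<lambda>k. k \<bullet> (\<Sum>\<sigma>\<in>spins. (\<mu> \<sigma> * exp(-(\<theta>0 \<bullet> xv u \<sigma>))) *\<^sub>R (- xv u \<sigma>)))) (at \<theta>0)"
  apply (rule has_derivative_eq_rhs)
   apply (rule derivative_eq_intros | simp)+
  by (simp add: inner_sum_right algebra_simps)

lemma inner_bound:
  assumes "\<sigma> \<in> spins"
  shows "\<bar>\<theta> \<bullet> xv u \<sigma>\<bar> \<le> l1norm \<theta>"
proof -
  have "\<bar>\<theta> \<bullet> xv u \<sigma>\<bar> = \<bar>\<Sum>w\<in>UNIV. \<theta>$w * xv u \<sigma> $ w\<bar>" by (simp add: inner_vec_def)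
  also have "\<dots> \<le> (\<Sum>w\<in>UNIV. \<bar>\<theta>$w * xv u \<sigma> $ w\<bar>)" by (rule sum_abs)
  also have "\<dots> = (\<Sum>w\<in>UNIV. \<bar>\<theta>$w\<bar>)"
    by (rule sum.cong) (auto simp: abs_mult xv_def spins_abs[OF assms])
  finally show ?thesis by (simp add: l1norm_def)
qed

lemma l1_true:
  assumes "l1_width_le J h \<gamma>"
  shows "l1norm (true_local_param J h u) \<le> \<gamma>"
proof -
  have "l1norm (true_local_param J h u) = \<bar>h u\<bar> + (\<Sum>w\<in>UNIV-{u}. \<bar>true_local_param J h u $ w\<bar>)"
    by (simp add: l1norm_def sum.remove[of UNIV u] true_local_param_def)
  also have "(\<Sum>w\<in>UNIV-{u}. \<bar>true_local_param J h u $ w\<bar>) = (\<Sum>w\<in>UNIV-{u}. \<bar>J u w\<bar>)"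
    by (rule sum.cong) (auto simp: true_local_param_def)
  finally show ?thesis using assms by (simp add: l1_width_le_def add.commute)
qed

lemma l1_diff: "l1norm (a - b) \<le> l1norm a + l1norm (b::real^'n::finite)"
  unfolding l1norm_def by (simp flip: sum.distrib add: sum_mono abs_triangle_ineq4)

theorem mainTheorem8:
  fixes J :: "'n::finite \<Rightarrow> 'n \<Rightarrow> real" and h :: "'n \<Rightarrow> real"
    and \<gamma> :: real and u :: 'n
  assumes sym: "\<And>a b. J a b = J b a"
    and gpos: "\<gamma> > 0"
    and width: "l1_width_le J h \<gamma>"
  shows "\<exists>g. GDERIV (ISO_loss J h u) (true_local_param J h u) :> g \<and>
    (\<forall>\<theta>::real^'n. l1norm \<theta> \<le> \<gamma> \<longrightarrow>
       (\<forall>v. v \<noteq> u \<longrightarrow>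
          ISO_loss J h u \<theta> - ISO_loss J h u (true_local_param J h u)
            - g \<bullet> (\<theta> - true_local_param J h u)
          \<ge> exp (-3*\<gamma>) / (2 + 2*\<gamma>) * \<bar>\<theta>$v - true_local_param J h u $ v\<bar>^2))"
proof -
  define \<mu> where "\<mu> = ising_mu J h"
  define ts where "ts = true_local_param J h u"
  define g where "g = (\<Sum>\<sigma>\<in>spins. (\<mu> \<sigma> * exp(-(ts \<bullet> xv u \<sigma>))) *\<^sub>R (- xv u \<sigma>))"
  have L: "ISO_loss J h u = (\<lambda>\<theta>. \<Sum>\<sigma>\<in>spins. \<mu> \<sigma> * exp(-(\<theta> \<bullet> xv u \<sigma>)))"
    by (rule ext) (simp add: ISO_loss_def le_inner \<mu>_def)
  have G: "GDERIV (ISO_loss J h u) ts :> g"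
    unfolding gderiv_def L g_def by (rule deriv_test)
  have ineq: "ISO_loss J h u \<theta> - ISO_loss J h u ts - g \<bullet> (\<theta> - ts)
          \<ge> exp (-3*\<gamma>) / (2 + 2*\<gamma>) * \<bar>\<theta>$v - ts $ v\<bar>^2"
    if l1: "l1norm \<theta> \<le> \<gamma>" and vu: "v \<noteq> u" for \<theta> v
  proof -
    define \<Delta> where "\<Delta> = \<theta> - ts"
    define K where "K = exp (-\<gamma>) / (2 + 2*\<gamma>)"
    have K0: "K \<ge> 0" using gpos by (simp add: K_def)
    have lts: "l1norm ts \<le> \<gamma>" unfolding ts_def by (rule l1_true[OF width])
    have lD: "l1norm \<Delta> \<le> 2*\<gamma>" using l1_diff[of \<theta> ts] l1 lts by (simp add: \<Delta>_def)
    have gD: "g \<bullet> \<Delta> = (\<Sum>\<sigma>\<in>spins. \<mu> \<sigma> * exp(-(ts \<bullet> xv u \<sigma>)) * (- (\<Delta> \<bullet> xv u \<sigma>)))"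
      by (simp add: g_def inner_sum_left inner_sum_right inner_commute)
    have tm: "\<mu> \<sigma> * exp(-(\<theta> \<bullet> xv u \<sigma>)) - \<mu> \<sigma> * exp(-(ts \<bullet> xv u \<sigma>))
        - \<mu> \<sigma> * exp(-(ts \<bullet> xv u \<sigma>)) * (- (\<Delta> \<bullet> xv u \<sigma>)) \<ge> K * (\<mu> \<sigma> * (\<Delta> \<bullet> xv u \<sigma>)^2)"
      if sp: "\<sigma> \<in> spins" for \<sigma>
    proof -
      define a where "a = ts \<bullet> xv u \<sigma>"
      define z where "z = \<Delta> \<bullet> xv u \<sigma>"
      have tz: "\<theta> \<bullet> xv u \<sigma> = a + z" by (simp add: a_def z_def \<Delta>_def inner_diff_left)
      have ab: "\<bar>a\<bar> \<le> \<gamma>" using inner_bound[OF sp, of ts u] lts by (simp add: a_def)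
      have zb: "\<bar>z\<bar> \<le> 2*\<gamma>" using inner_bound[OF sp, of \<Delta> u] lD by (simp add: z_def)
      have m0: "\<mu> \<sigma> \<ge> 0" by (simp add: \<mu>_def mu_nonneg)
      have ea: "exp (-\<gamma>) \<le> exp (-a)" using ab by simp
      have q1: "z^2 / (2 + 2*\<gamma>) \<le> z^2 / (2 + \<bar>z\<bar>)"
        using zb by (intro divide_left_mono) auto
      have q: "z^2 / (2 + 2*\<gamma>) \<le> exp(-z) - 1 + z" using q1 exp_quad_lower[of z] by linarith
      have q0: "0 \<le> z^2 / (2 + 2*\<gamma>)" using gpos by simp
      have "exp (-\<gamma>) * (z^2 / (2 + 2*\<gamma>)) \<le> exp (-a) * (exp(-z) - 1 + z)"
        using ea q q0 by (intro mult_mono) auto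
      hence "\<mu> \<sigma> * (exp (-\<gamma>) * (z^2 / (2 + 2*\<gamma>))) \<le> \<mu> \<sigma> * (exp (-a) * (exp(-z) - 1 + z))"
        using m0 by (rule mult_left_mono)
      moreover have "exp (-(a + z)) = exp (-a) * exp (-z)" by (simp flip: exp_add)
      ultimately show ?thesis
        by (simp add: tz K_def flip: a_def z_def) (simp add: algebra_simps)
    qed
    have "ISO_loss J h u \<theta> - ISO_loss J h u ts - g \<bullet> \<Delta>
        = (\<Sum>\<sigma>\<in>spins. \<mu> \<sigma> * exp(-(\<theta> \<bullet> xv u \<sigma>)) - \<mu> \<sigma> * exp(-(ts \<bullet> xv u \<sigma>))
        - \<mu> \<sigma> * exp(-(ts \<bullet> xv u \<sigma>)) * (- (\<Delta> \<bullet> xv u \<sigma>)))"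
      by (simp only: L gD flip: sum_subtractf)
    also have "\<dots> \<ge> (\<Sum>\<sigma>\<in>spins. K * (\<mu> \<sigma> * (\<Delta> \<bullet> xv u \<sigma>)^2))"
      by (rule sum_mono) (rule tm)
    also have "(\<Sum>\<sigma>\<in>spins. K * (\<mu> \<sigma> * (\<Delta> \<bullet> xv u \<sigma>)^2)) = K * (\<Sum>\<sigma>\<in>spins. \<mu> \<sigma> * (\<Delta> \<bullet> xv u \<sigma>)^2)"
      by (simp add: sum_distrib_left)
    also have "K * (\<Sum>\<sigma>\<in>spins. \<mu> \<sigma> * (\<Delta> \<bullet> xv u \<sigma>)^2) \<ge> K * (exp(-2*\<gamma>) * (\<Delta>$v)^2)"
      using variance_lb[OF sym width gpos vu, of \<Delta>] K0 unfolding \<mu>_def by (rule mult_left_mono)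
    also have "K * (exp(-2*\<gamma>) * (\<Delta>$v)^2) = exp (-3*\<gamma>) / (2 + 2*\<gamma>) * \<bar>\<theta>$v - ts $ v\<bar>^2"
    proof -
      have "exp (-3*\<gamma>) = exp (-\<gamma>) * exp(-2*\<gamma>)" by (simp flip: exp_add)
      thus ?thesis by (simp add: K_def \<Delta>_def)
    qed
    finally show ?thesis by (simp add: \<Delta>_def)
  qed
  show ?thesis using G ineq unfolding ts_def by blast
qed

end
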